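(* Let $H$ be an $n\times(n-1)$ unreduced upper Hessenberg $0/1$-matrix whose columns together with the origin form an acute $(n-1)$-simplex in $[0,1]^n$. Then there exist at most two $(n+1)\times n$ unreduced upper Hessenberg $0/1$-matrices whose columns together with the origin form an acute $n$-simplex in $[0,1]^{n+1}$ and whose top left $n\times(n-1)$ submatrix equals $H$.
   Context: An $m\times p$ matrix $A=(a_{ij})$ is unreduced upper Hessenberg if $a_{ij}=0$ whenever $i>j+1$ and $a_{j+1,j}\neq0$ for all $j$. The columns $p_1,\dots,p_j$ of a $0/1$-matrix $P$ together with the origin form an acute $j$-simplex if $G=P^\top P$ is invertible, every off-diagonal entry of $G^{-1}$ is negative and every row sum of $G^{-1}$ is positive (equivalently, all dihedral angles of the simplex are acute). *)

theory Defs
  imports "Jordan_Normal_Form.Matrix"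
begin

text \<open>Matrices are Jordan_Normal_Form matrices (dimensions carried by the value),
  indices are 0-based.\<close>

definition zero_one_mat :: "real mat \<Rightarrow> bool" where
  "zero_one_mat A \<longleftrightarrow> (\<forall>i < dim_row A. \<forall>j < dim_col A. A $$ (i,j) = 0 \<or> A $$ (i,j) = 1)"

definition unreduced_upper_hessenberg :: "real mat \<Rightarrow> bool" where
  "unreduced_upper_hessenberg A \<longleftrightarrow>
     (\<forall>i < dim_row A. \<forall>j < dim_col A. i > j + 1 \<longrightarrow> A $$ (i,j) = 0) \<and>
     (\<forall>j < dim_col A. j + 1 < dim_row A \<longrightarrow> A $$ (j+1, j) \<noteq> 0)"

text \<open>The columns of P together with the origin form an acute simplex:
  G = P^T P is invertible, every off-diagonal entry of G^{-1} is negative and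
  every row sum of G^{-1} is positive.\<close>
definition acute_simplex :: "real mat \<Rightarrow> bool" where
  "acute_simplex P \<longleftrightarrow>
     (let G = transpose_mat P * P; k = dim_col P in
        invertible_mat G \<and>
        (\<exists>Gi \<in> carrier_mat k k. inverts_mat G Gi \<and> inverts_mat Gi G \<and>
           (\<forall>i < k. \<forall>j < k. i \<noteq> j \<longrightarrow> Gi $$ (i,j) < 0) \<and>
           (\<forall>i < k. (\<Sum>j<k. Gi $$ (i,j)) > 0)))"

end

theory Submission imports Defs begin

lemma gram_entry:
  assumes "A \<in> carrier_mat m k" "i < k" "j < k"
  shows "(transpose_mat A * A) $$ (i,j) = (\<Sum>r<m. A$$(r,i) * A$$(r,j))"
  using assms by (auto simp: scalar_prod_def lessThan_atLeast0 intro!: sum.cong)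

lemma sum01_pos:
  fixes f g :: "nat \<Rightarrow> real"
  assumes "(\<Sum>r<N. f r * g r) > 0" "\<And>r. r<N \<Longrightarrow> f r = 0 \<or> f r = 1" "\<And>r. r<N \<Longrightarrow> g r = 0 \<or> g r = 1"
  shows "\<exists>r<N. f r = 1 \<and> g r = 1"
proof (rule ccontr)
  assume "\<not> ?thesis"
  then have "\<And>r. r<N \<Longrightarrow> f r * g r = 0" using assms(2,3) by fastforce
  then have "(\<Sum>r<N. f r * g r) = 0" by (intro sum.neutral) auto
  with assms(1) show False by simp
qed

lemma sum01_lt:
  fixes f g :: "nat \<Rightarrow> real"
  assumes "(\<Sum>r<N. f r * g r) < (\<Sum>r<N. f r * f r)" "\<And>r. r<N \<Longrightarrow> f r = 0 \<or> f r = 1" "\<And>r. r<N \<Longrightarrow> g r = 0 \<or> g r = 1"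
  shows "\<exists>r<N. f r = 1 \<and> g r = 0"
proof (rule ccontr)
  assume "\<not> ?thesis"
  then have "\<And>r. r<N \<Longrightarrow> f r * g r = f r * f r" using assms(2,3) by fastforce
  then have "(\<Sum>r<N. f r * g r) = (\<Sum>r<N. f r * f r)" by (intro sum.cong) auto
  with assms(1) show False by simp
qed

lemma maxp:
  fixes G M :: "real mat"
  assumes G: "G \<in> carrier_mat m m" and M: "M \<in> carrier_mat m m"
    and MG: "M * G = 1\<^sub>m m"
    and off: "\<And>i j. i<m \<Longrightarrow> j<m \<Longrightarrow> i \<noteq> j \<Longrightarrow> M$$(i,j) < 0"
    and rs: "\<And>i. i<m \<Longrightarrow> (\<Sum>j<m. M$$(i,j)) > 0"
    and k: "k < m"
  shows "(\<forall>i<m. G$$(i,k) > 0) \<and> (\<forall>i<m. i \<noteq> k \<longrightarrow> G$$(i,k) < G$$(k,k))"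
proof -
  define y where "y i = G$$(i,k)" for i
  have eq: "(\<Sum>l<m. M$$(i,l) * y l) = (if i = k then 1 else 0)" if "i<m" for i
  proof -
    have "(M*G)$$(i,k) = (\<Sum>l<m. M$$(i,l) * y l)"
      using that G M k by (auto simp: scalar_prod_def lessThan_atLeast0 y_def intro!: sum.cong)
    then show ?thesis using MG that k by simp
  qed
  have low: "(\<Sum>l<m. M$$(i,l) * y l) \<le> (\<Sum>l<m. M$$(i,l)) * y i"
    if "i<m" "\<And>l. l<m \<Longrightarrow> y i \<le> y l" for i
  proof -
    have "(\<Sum>l<m. M$$(i,l) * y l) \<le> (\<Sum>l<m. M$$(i,l) * y i)"
    proof (rule sum_mono)
      fix l assume "l \<in> {..<m}"
      then show "M$$(i,l) * y l \<le> M$$(i,l) * y i"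
        using off[of i l] that by (cases "l = i") (auto intro: mult_left_mono_neg)
    qed
    then show ?thesis by (simp add: sum_distrib_right)
  qed
  have up: "(\<Sum>l<m. M$$(i,l) * y l) \<ge> (\<Sum>l<m. M$$(i,l)) * y i"
    if "i<m" "\<And>l. l<m \<Longrightarrow> y l \<le> y i" for i
  proof -
    have "(\<Sum>l<m. M$$(i,l) * y l) \<ge> (\<Sum>l<m. M$$(i,l) * y i)"
    proof (rule sum_mono)
      fix l assume "l \<in> {..<m}"
      then show "M$$(i,l) * y i \<le> M$$(i,l) * y l"
        using off[of i l] that by (cases "l = i") (auto intro: mult_left_mono_neg)
    qed
    then show ?thesis by (simp add: sum_distrib_right)
  qed
  have fin: "finite (y ` {..<m})" "y ` {..<m} \<noteq> {}" using k by auto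
  obtain i0 where i0: "i0 < m" "y i0 = Min (y ` {..<m})" using Min_in[OF fin] by auto
  have i0min: "\<And>l. l<m \<Longrightarrow> y i0 \<le> y l" using i0 fin by simp
  have pos: "\<forall>i<m. y i > 0"
  proof (rule ccontr)
    assume "\<not> ?thesis"
    then obtain i where "i<m" "y i \<le> 0" by force
    then have yi0: "y i0 \<le> 0" using i0min by force
    have r0: "(\<Sum>l<m. M$$(i0,l)) > 0" using rs i0 by auto
    have L: "(\<Sum>l<m. M$$(i0,l) * y l) \<le> (\<Sum>l<m. M$$(i0,l)) * y i0" using low i0 i0min by blast
    have "(\<Sum>l<m. M$$(i0,l)) * y i0 \<le> 0" using r0 yi0 by (simp add: mult_nonneg_nonpos less_imp_le)
    show False
    proof (cases "i0 = k")
      case True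
      then show False using L eq[OF i0(1)] \<open>(\<Sum>l<m. M$$(i0,l)) * y i0 \<le> 0\<close> by simp
    next
      case False
      then have "(\<Sum>l<m. M$$(i0,l)) * y i0 \<ge> 0" using L eq[OF i0(1)] by simp
      then have "y i0 = 0" using r0 yi0 by (simp add: zero_le_mult_iff)
      have "(\<Sum>l<m. M$$(i0,l) * (y l - y i0)) = (\<Sum>l<m. M$$(i0,l) * y l) - (\<Sum>l<m. M$$(i0,l)) * y i0"
        by (simp add: algebra_simps sum_subtractf sum_distrib_right sum_distrib_left)
      also have "\<dots> = 0" using eq[OF i0(1)] False \<open>y i0 = 0\<close> by simp
      finally have S0: "(\<Sum>l<m. M$$(i0,l) * (y l - y i0)) = 0" .
      have nonpos: "\<forall>l\<in>{..<m}. M$$(i0,l) * (y l - y i0) \<le> 0"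
      proof
        fix l assume l: "l \<in> {..<m}"
        show "M$$(i0,l) * (y l - y i0) \<le> 0"
        proof (cases "l = i0")
          case False
          then have "M$$(i0,l) \<le> 0" using off[of i0 l] i0(1) l by force
          moreover have "y l - y i0 \<ge> 0" using i0min l by simp
          ultimately show ?thesis by (simp add: mult_nonpos_nonneg)
        qed simp
      qed
      have "\<forall>l\<in>{..<m}. M$$(i0,l) * (y l - y i0) = 0"
      proof -
        have "(\<Sum>l<m. - (M$$(i0,l) * (y l - y i0))) = 0" using S0 by (simp add: sum_negf)
        moreover have "\<forall>l\<in>{..<m}. - (M$$(i0,l) * (y l - y i0)) \<ge> 0" using nonpos by auto
        ultimately show ?thesis
          using sum_nonneg_eq_0_iff[of "{..<m}" "\<lambda>l. - (M$$(i0,l) * (y l - y i0))"] by auto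
      qed
      then have "\<And>l. l<m \<Longrightarrow> y l = 0"
        using off[of i0] i0(1) \<open>y i0 = 0\<close> by (metis lessThan_iff mult_eq_0_iff less_irrefl right_minus_eq)
      then have "(\<Sum>l<m. M$$(k,l) * y l) = 0" by simp
      then show False using eq[OF k] by simp
    qed
  qed
  have dm: "\<forall>i<m. i \<noteq> k \<longrightarrow> y i < y k"
  proof (rule ccontr)
    assume "\<not> ?thesis"
    then obtain i where i: "i<m" "i \<noteq> k" "y k \<le> y i" by force
    obtain i1 where i1: "i1 < m" "y i1 = Max (y ` {..<m})" using Max_in[OF fin] by auto
    have i1max: "\<And>l. l<m \<Longrightarrow> y l \<le> y i1" using i1 fin by simp
    define i2 where "i2 = (if i1 = k then i else i1)"
    have i2: "i2 < m" "i2 \<noteq> k" "\<And>l. l<m \<Longrightarrow> y l \<le> y i2"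
    proof -
      show "i2 < m" "i2 \<noteq> k" using i i1 unfolding i2_def by auto
      fix l assume l: "l < m"
      show "y l \<le> y i2"
      proof (cases "i1 = k")
        case True
        then have "y i1 \<le> y i" using i by simp
        then show ?thesis using i1max[OF l] True unfolding i2_def by simp
      next
        case False then show ?thesis using i1max[OF l] unfolding i2_def by simp
      qed
    qed
    have U: "(\<Sum>l<m. M$$(i2,l) * y l) \<ge> (\<Sum>l<m. M$$(i2,l)) * y i2" using up i2 by blast
    have "(\<Sum>l<m. M$$(i2,l)) * y i2 > 0" using rs[OF i2(1)] pos i2(1) by simp
    then show False using U eq[OF i2(1)] i2(2) by simp
  qed
  show ?thesis using pos dm unfolding y_def by blast
qed

lemma key:
  fixes h :: "nat \<Rightarrow> nat \<Rightarrow> bool" and c :: "nat \<Rightarrow> bool" and N :: nat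
  assumes hess: "\<And>r j. j < N \<Longrightarrow> h r j \<Longrightarrow> r \<le> Suc j"
    and HI1: "\<And>i j. i < j \<Longrightarrow> j < N \<Longrightarrow> \<exists>r. h r i \<and> h r j"
    and HI2: "\<And>i j. i < j \<Longrightarrow> j < N \<Longrightarrow> \<exists>r. h r i \<and> \<not> h r j"
    and C1: "\<And>j. j < N \<Longrightarrow> \<exists>r. h r j \<and> c r"
    and C2: "\<And>j. j < N \<Longrightarrow> \<exists>r. h r j \<and> \<not> c r"
  shows "j < N \<Longrightarrow> \<forall>u\<le>j. h u j \<longleftrightarrow> c u \<noteq> c (Suc j)"
proof (induction j rule: less_induct)
  case (less j)
  have IH: "\<And>i u. i < j \<Longrightarrow> u \<le> i \<Longrightarrow> h u i \<longleftrightarrow> c u \<noteq> c (Suc i)"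
    using less by auto
  have A: "(\<forall>u\<le>j. h u j \<longleftrightarrow> c u = c 0) \<or> (\<forall>u\<le>j. h u j \<longleftrightarrow> c u \<noteq> c 0)"
  proof (cases "h 0 j")
    case True
    have "m \<le> j \<Longrightarrow> \<forall>u\<le>m. h u j \<longleftrightarrow> c u = c 0" for m
    proof (induction m)
      case 0 then show ?case using True by auto
    next
      case (Suc m)
      then have mj: "m < j" and IHm: "\<forall>u\<le>m. h u j \<longleftrightarrow> c u = c 0" by auto
      have new: "h (Suc m) j \<longleftrightarrow> c (Suc m) = c 0"
      proof (cases "c (Suc m) = c 0")
        case True
        obtain r where r: "h r m" "h r j" using HI1[OF mj less.prems] by blast
        have "r \<le> Suc m" using hess r(1) mj less.prems by auto
        moreover have "r \<noteq> Suc m \<Longrightarrow> False"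
        proof -
          assume "r \<noteq> Suc m"
          then have "r \<le> m" using \<open>r \<le> Suc m\<close> by auto
          then show False using IH[OF mj, of r] r IHm True by auto
        qed
        ultimately show ?thesis using r True by auto
      next
        case False
        obtain r where r: "h r m" "\<not> h r j" using HI2[OF mj less.prems] by blast
        have "r \<le> Suc m" using hess r(1) mj less.prems by auto
        moreover have "r \<noteq> Suc m \<Longrightarrow> False"
        proof -
          assume "r \<noteq> Suc m"
          then have "r \<le> m" using \<open>r \<le> Suc m\<close> by auto
          then show False using IH[OF mj, of r] r IHm False by auto
        qed
        ultimately show ?thesis using r False by auto
      qed
      show ?case using IHm new le_Suc_eq by auto
    qed
    then show ?thesis by auto
  next
    case False
    have "m \<le> j \<Longrightarrow> \<forall>u\<le>m. h u j \<longleftrightarrow> c u \<noteq> c 0" for m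
    proof (induction m)
      case 0 then show ?case using False by auto
    next
      case (Suc m)
      then have mj: "m < j" and IHm: "\<forall>u\<le>m. h u j \<longleftrightarrow> c u \<noteq> c 0" by auto
      have new: "h (Suc m) j \<longleftrightarrow> c (Suc m) \<noteq> c 0"
      proof (cases "c (Suc m) = c 0")
        case False
        obtain r where r: "h r m" "h r j" using HI1[OF mj less.prems] by blast
        have "r \<le> Suc m" using hess r(1) mj less.prems by auto
        moreover have "r \<noteq> Suc m \<Longrightarrow> False"
        proof -
          assume "r \<noteq> Suc m"
          then have "r \<le> m" using \<open>r \<le> Suc m\<close> by auto
          then show False using IH[OF mj, of r] r IHm False by auto
        qed
        ultimately show ?thesis using r False by auto
      next
        case True
        obtain r where r: "h r m" "\<not> h r j" using HI2[OF mj less.prems] by blast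
        have "r \<le> Suc m" using hess r(1) mj less.prems by auto
        moreover have "r \<noteq> Suc m \<Longrightarrow> False"
        proof -
          assume "r \<noteq> Suc m"
          then have "r \<le> m" using \<open>r \<le> Suc m\<close> by auto
          then show False using IH[OF mj, of r] r IHm True by auto
        qed
        ultimately show ?thesis using r True by auto
      qed
      show ?case using IHm new le_Suc_eq by auto
    qed
    then show ?thesis by auto
  qed
  obtain r1 where r1: "h r1 j" "c r1" using C1[OF less.prems] by blast
  obtain r2 where r2: "h r2 j" "\<not> c r2" using C2[OF less.prems] by blast
  have b1: "r1 \<le> Suc j" "r2 \<le> Suc j" using hess less.prems r1 r2 by auto
  from A show ?case
  proof
    assume X: "\<forall>u\<le>j. h u j \<longleftrightarrow> c u = c 0"
    have "c (Suc j) \<noteq> c 0"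
    proof
      assume e: "c (Suc j) = c 0"
      have "c r1 = c 0" using X r1 b1 e le_Suc_eq by (cases "r1 = Suc j") auto
      moreover have "c r2 = c 0" using X r2 b1 e le_Suc_eq by (cases "r2 = Suc j") auto
      ultimately show False using r1 r2 by simp
    qed
    then show ?thesis using X by auto
  next
    assume X: "\<forall>u\<le>j. h u j \<longleftrightarrow> c u \<noteq> c 0"
    have "c (Suc j) = c 0"
    proof (rule ccontr)
      assume e: "c (Suc j) \<noteq> c 0"
      have "c r1 \<noteq> c 0" using X r1 b1 e le_Suc_eq by (cases "r1 = Suc j") auto
      moreover have "c r2 \<noteq> c 0" using X r2 b1 e le_Suc_eq by (cases "r2 = Suc j") auto
      ultimately show False using r1 r2 by auto
    qed
    then show ?thesis using X by auto
  qed
qed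

lemma acute_facts:
  fixes A :: "real mat"
  assumes A: "A \<in> carrier_mat m k" and ac: "acute_simplex A" and i: "i < k" and j: "j < k"
  shows "(\<Sum>r<m. A$$(r,i) * A$$(r,j)) > 0"
    and "i \<noteq> j \<Longrightarrow> (\<Sum>r<m. A$$(r,j) * A$$(r,i)) < (\<Sum>r<m. A$$(r,j) * A$$(r,j))"
proof -
  define G where "G = transpose_mat A * A"
  have G: "G \<in> carrier_mat k k" using A unfolding G_def by auto
  obtain Gi where Gi: "Gi \<in> carrier_mat k k" "inverts_mat Gi G"
    "\<And>i j. i<k \<Longrightarrow> j<k \<Longrightarrow> i \<noteq> j \<Longrightarrow> Gi$$(i,j) < 0"
    "\<And>i. i<k \<Longrightarrow> (\<Sum>j<k. Gi$$(i,j)) > 0"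
    using ac A unfolding acute_simplex_def Let_def G_def by auto
  have MG: "Gi * G = 1\<^sub>m k" using Gi(1,2) unfolding inverts_mat_def by simp
  have mp: "\<And>kk. kk < k \<Longrightarrow> (\<forall>i<k. G$$(i,kk) > 0) \<and> (\<forall>i<k. i \<noteq> kk \<longrightarrow> G$$(i,kk) < G$$(kk,kk))"
    using maxp[OF G Gi(1) MG Gi(3) Gi(4)] by blast
  have ge: "\<And>a b. a < k \<Longrightarrow> b < k \<Longrightarrow> G$$(a,b) = (\<Sum>r<m. A$$(r,a) * A$$(r,b))"
    unfolding G_def using gram_entry[OF A] by blast
  show "(\<Sum>r<m. A$$(r,i) * A$$(r,j)) > 0" using mp[OF j] ge[OF i j] i by auto
  show "i \<noteq> j \<Longrightarrow> (\<Sum>r<m. A$$(r,j) * A$$(r,i)) < (\<Sum>r<m. A$$(r,j) * A$$(r,j))"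
    using mp[OF j] ge[OF i j] ge[OF j j] i j by (auto simp: mult.commute)
qed

theorem lemma6p6:
  fixes H :: "real mat" and n :: nat
  assumes "H \<in> carrier_mat n (n - 1)"
    and "zero_one_mat H"
    and "unreduced_upper_hessenberg H"
    and "acute_simplex H"
  shows "finite {A \<in> carrier_mat (n+1) n. zero_one_mat A \<and> unreduced_upper_hessenberg A
                   \<and> acute_simplex A \<and> (\<forall>i < n. \<forall>j < n - 1. A $$ (i,j) = H $$ (i,j))}
       \<and> card {A \<in> carrier_mat (n+1) n. zero_one_mat A \<and> unreduced_upper_hessenberg A
                   \<and> acute_simplex A \<and> (\<forall>i < n. \<forall>j < n - 1. A $$ (i,j) = H $$ (i,j))} \<le> 2"
proof -
  define S where "S = {A \<in> carrier_mat (n+1) n. zero_one_mat A \<and> unreduced_upper_hessenberg A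
                   \<and> acute_simplex A \<and> (\<forall>i < n. \<forall>j < n - 1. A $$ (i,j) = H $$ (i,j))}"
  have H: "H \<in> carrier_mat n (n - 1)" by fact
  have H01: "\<And>i j. i<n \<Longrightarrow> j<n-1 \<Longrightarrow> H$$(i,j) = 0 \<or> H$$(i,j) = 1"
    using assms(1,2) unfolding zero_one_mat_def by auto
  have Hh: "\<And>r j. r<n \<Longrightarrow> j<n-1 \<Longrightarrow> H$$(r,j) = 1 \<Longrightarrow> r \<le> Suc j"
    using assms(1,3) unfolding unreduced_upper_hessenberg_def
    by (metis Suc_eq_plus1 carrier_matD(1,2) not_less zero_neq_one)
  define h where "h r j = (r < n \<and> H$$(r,j) = 1)" for r j
  have hess: "\<And>r j. j < n-1 \<Longrightarrow> h r j \<Longrightarrow> r \<le> Suc j" using Hh unfolding h_def by blast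
  have HI1: "\<exists>r. h r i \<and> h r j" if ij: "i < j" "j < n-1" for i j
  proof -
    have "(\<Sum>r<n. H$$(r,i) * H$$(r,j)) > 0" using acute_facts(1)[OF H assms(4)] ij by auto
    then obtain r where "r<n" "H$$(r,i) = 1" "H$$(r,j) = 1"
      using sum01_pos[where N=n and f="\<lambda>r. H$$(r,i)" and g="\<lambda>r. H$$(r,j)"] H01 ij by auto
    then show ?thesis unfolding h_def by blast
  qed
  have HI2: "\<exists>r. h r i \<and> \<not> h r j" if ij: "i < j" "j < n-1" for i j
  proof -
    have "(\<Sum>r<n. H$$(r,i) * H$$(r,j)) < (\<Sum>r<n. H$$(r,i) * H$$(r,i))"
      using acute_facts(2)[OF H assms(4), of j i] ij by auto
    then obtain r where "r<n" "H$$(r,i) = 1" "H$$(r,j) = 0"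
      using sum01_lt[where N=n and f="\<lambda>r. H$$(r,i)" and g="\<lambda>r. H$$(r,j)"] H01 ij by auto
    then show ?thesis unfolding h_def by auto
  qed
  have det: "(A$$(Suc j, n-1) = 1) \<longleftrightarrow> (h 0 j \<longleftrightarrow> A$$(0, n-1) \<noteq> 1)"
    if AS: "A \<in> S" and j: "j < n-1" for A j
  proof -
    have A: "A \<in> carrier_mat (n+1) n" and A01: "zero_one_mat A" and Ah: "unreduced_upper_hessenberg A"
      and Aac: "acute_simplex A" and AH: "\<forall>i < n. \<forall>j < n - 1. A $$ (i,j) = H $$ (i,j)"
      using AS unfolding S_def by auto
    have A01': "\<And>i j. i<n+1 \<Longrightarrow> j<n \<Longrightarrow> A$$(i,j) = 0 \<or> A$$(i,j) = 1"
      using A A01 unfolding zero_one_mat_def by auto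
    have Alast: "\<And>j. j < n-1 \<Longrightarrow> A$$(n,j) = 0"
      using A Ah unfolding unreduced_upper_hessenberg_def by auto
    define c where "c r = (A$$(r,n-1) = 1)" for r
    have C1: "\<exists>r. h r j \<and> c r" if j: "j < n-1" for j
    proof -
      have "(\<Sum>r<n+1. A$$(r,j) * A$$(r,n-1)) > 0" using acute_facts(1)[OF A Aac, of j "n-1"] j by auto
      then obtain r where r: "r<n+1" "A$$(r,j) = 1" "A$$(r,n-1) = 1"
        using sum01_pos[where N="n+1" and f="\<lambda>r. A$$(r,j)" and g="\<lambda>r. A$$(r,n-1)"] A01' j by auto
      have "r \<noteq> n" using r Alast[OF j] by auto
      then have "r < n" using r by auto
      then show ?thesis using r AH j unfolding h_def c_def by auto
    qed
    have C2: "\<exists>r. h r j \<and> \<not> c r" if j: "j < n-1" for j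
    proof -
      have "(\<Sum>r<n+1. A$$(r,j) * A$$(r,n-1)) < (\<Sum>r<n+1. A$$(r,j) * A$$(r,j))"
        using acute_facts(2)[OF A Aac, of "n-1" j] j by auto
      then obtain r where r: "r<n+1" "A$$(r,j) = 1" "A$$(r,n-1) = 0"
        using sum01_lt[where N="n+1" and f="\<lambda>r. A$$(r,j)" and g="\<lambda>r. A$$(r,n-1)"] A01' j by auto
      have "r \<noteq> n" using r Alast[OF j] by auto
      then have "r < n" using r by auto
      then show ?thesis using r AH j unfolding h_def c_def by auto
    qed
    have "\<forall>u\<le>j. h u j \<longleftrightarrow> c u \<noteq> c (Suc j)"
      using key[of "n-1" h, OF hess HI1 HI2 C1 C2 j] by blast
    then have "h 0 j \<longleftrightarrow> c 0 \<noteq> c (Suc j)" by blast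
    then show ?thesis by (auto simp: c_def)
  qed
  define f where "f A = (if n = 0 then 0 else A$$(0,n-1))" for A :: "real mat"
  have inj: "inj_on f S"
  proof
    fix A B assume AS: "A \<in> S" and BS: "B \<in> S" and fe: "f A = f B"
    have A: "A \<in> carrier_mat (n+1) n" and A01: "zero_one_mat A" and Ah: "unreduced_upper_hessenberg A"
      and AH: "\<forall>i < n. \<forall>j < n - 1. A $$ (i,j) = H $$ (i,j)"
      using AS unfolding S_def by auto
    have B: "B \<in> carrier_mat (n+1) n" and B01: "zero_one_mat B" and Bh: "unreduced_upper_hessenberg B"
      and BH: "\<forall>i < n. \<forall>j < n - 1. B $$ (i,j) = H $$ (i,j)"
      using BS unfolding S_def by auto
    show "A = B"
    proof (rule eq_matI)
      show "dim_row A = dim_row B" "dim_col A = dim_col B" using A B by auto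
      fix i j assume i: "i < dim_row B" and j: "j < dim_col B"
      then have i: "i < n+1" and j: "j < n" using B by auto
      have a01: "A$$(i,j) = 0 \<or> A$$(i,j) = 1" "B$$(i,j) = 0 \<or> B$$(i,j) = 1"
        using A B A01 B01 i j unfolding zero_one_mat_def by auto
      show "A$$(i,j) = B$$(i,j)"
      proof (cases "j < n-1")
        case True
        show ?thesis
        proof (cases "i < n")
          case True then show ?thesis using AH BH \<open>j < n-1\<close> by auto
        next
          case False
          then have "i = n" using i by auto
          then show ?thesis using A B Ah Bh \<open>j < n-1\<close> unfolding unreduced_upper_hessenberg_def by auto
        qed
      next
        case False
        then have jn: "j = n-1" and n0: "n \<noteq> 0" using j by auto
        show ?thesis
        proof (cases "i = n")
          case True
          have sa: "\<forall>j<n. A$$(Suc j, j) \<noteq> 0" "\<forall>j<n. B$$(Suc j, j) \<noteq> 0"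
            using A B Ah Bh unfolding unreduced_upper_hessenberg_def by auto
          have "A$$(Suc (n-1),n-1) \<noteq> 0" "B$$(Suc (n-1),n-1) \<noteq> 0"
            using sa(1)[rule_format, of "n-1"] sa(2)[rule_format, of "n-1"] n0 by auto
          moreover have "Suc (n-1) = n" using n0 by simp
          ultimately have "A$$(i,j) \<noteq> 0" "B$$(i,j) \<noteq> 0" using True jn by auto
          then show ?thesis using a01 by auto
        next
          case False
          then have "i < n" using i by auto
          show ?thesis
          proof (cases i)
            case 0 then show ?thesis using fe n0 jn unfolding f_def by simp
          next
            case (Suc i')
            then have "i' < n-1" using \<open>i < n\<close> by auto
            then have "(A$$(i,j) = 1) \<longleftrightarrow> (B$$(i,j) = 1)"
              using det[OF AS, of i'] det[OF BS, of i'] Suc jn fe n0 unfolding f_def by simp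
            then show ?thesis using a01 by auto
          qed
        qed
      qed
    qed
  qed
  have img: "f ` S \<subseteq> {0,1}"
  proof
    fix x assume "x \<in> f ` S"
    then obtain A where AS: "A \<in> S" and x: "x = f A" by auto
    have "A \<in> carrier_mat (n+1) n" "zero_one_mat A" using AS unfolding S_def by auto
    then show "x \<in> {0,1}" using x unfolding f_def zero_one_mat_def by auto
  qed
  have fin: "finite S" using finite_imageD[OF finite_subset[OF img] inj] by simp
  have "card S = card (f ` S)" using card_image[OF inj] by simp
  also have "\<dots> \<le> card {0,1::real}" using card_mono[OF _ img] by simp
  finally have "card S \<le> 2" by simp
  with fin show ?thesis unfolding S_def by simp
qed

end
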